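(* Let $W\in\mathbb{R}^{m\times n}$ have rows $w_1,\dots,w_m$ that are iid $\mathcal{N}(0,I_n)$ random vectors, and for fixed $i$ let $E_i$ be the event $\langle w_i,\sum_{k=1}^m w_k\rangle\ge 0$. Let $m,n\to\infty$ with $m/n=c$. Then $\mathbb{P}(E_i)\to\frac12\mathrm{erfc}\!\left(-\frac{1}{\sqrt{2c}}\right)$.
   Context: $\mathrm{erfc}(z)=1-\frac{2}{\sqrt\pi}\int_0^z e^{-t^2}\,dt$. *)

theory Defs
  imports "HOL-Probability.Probability"
begin

text \<open>Complementary error function, erfc z = 1 - 2/sqrt pi * int_0^z exp(-t^2) dt
  (oriented interval integral, so negative z is handled correctly).\<close>
definition erfc :: "real \<Rightarrow> real" where
  "erfc z = 1 - 2 / sqrt pi * (LBINT t=ereal 0..ereal z. exp (- (t^2)))"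

text \<open>Law of an m x n matrix W with iid standard Gaussian entries W(k,j), k<m, j<n;
  rows w_k = (W(k,j))_j are then iid N(0,I_n).\<close>
definition gauss_matrix :: "nat \<Rightarrow> nat \<Rightarrow> (nat \<times> nat \<Rightarrow> real) measure" where
  "gauss_matrix m n = PiM ({..<m} \<times> {..<n}) (\<lambda>_. std_normal_distribution)"

definition event_E :: "nat \<Rightarrow> nat \<Rightarrow> nat \<Rightarrow> (nat \<times> nat \<Rightarrow> real) set" where
  "event_E m n i = {W \<in> space (gauss_matrix m n).
      (\<Sum>j<n. W (i, j) * (\<Sum>k<m. W (k, j))) \<ge> 0}"

end

theory Submission imports Defs begin

abbreviation "N \<equiv> std_normal_distribution"

lemma N_prob: "prob_space N"
  using prob_space_normal_density by simp

lemma space_N[simp]: "space N = UNIV" by simp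
lemma sets_N[simp]: "sets N = sets borel" by simp

lemma PiN_prob: "prob_space (PiM K (\<lambda>_. N))"
  by (intro prob_space_PiM N_prob)

lemma coord_distributed:
  assumes "k \<in> K"
  shows "distributed (PiM K (\<lambda>_. N)) lborel (\<lambda>y. y k) std_normal_density"
proof -
  have "distr (PiM K (\<lambda>_. N)) N (\<lambda>y. y k) = N"
    by (rule distr_PiM_component[OF N_prob assms])
  moreover have "distr (PiM K (\<lambda>_. N)) lborel (\<lambda>y. y k) = distr (PiM K (\<lambda>_. N)) N (\<lambda>y. y k)"
    by (rule distr_cong) auto
  ultimately show ?thesis
    unfolding distributed_def using assms by auto
qed

lemma coord_indep:
  assumes "K \<noteq> {}"
  shows "prob_space.indep_vars (PiM K (\<lambda>_. N)) (\<lambda>_. borel) (\<lambda>k y. y k) K"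
proof -
  interpret P: prob_space "PiM K (\<lambda>_. N)" by (rule PiN_prob)
  have d: "distr (PiM K (\<lambda>_. N)) borel (\<lambda>y. y k) = N" if "k \<in> K" for k
  proof -
    have "distr (PiM K (\<lambda>_. N)) N (\<lambda>y. y k) = N"
      by (rule distr_PiM_component[OF N_prob that])
    moreover have "distr (PiM K (\<lambda>_. N)) borel (\<lambda>y. y k) = distr (PiM K (\<lambda>_. N)) N (\<lambda>y. y k)"
      by (rule distr_cong) auto
    ultimately show ?thesis by simp
  qed
  have "distr (PiM K (\<lambda>_. N)) (PiM K (\<lambda>_. borel)) (\<lambda>x. \<lambda>k\<in>K. x k) = PiM K (\<lambda>_. N)"
  proof -
    have "distr (PiM K (\<lambda>_. N)) (PiM K (\<lambda>_. borel)) (\<lambda>x. \<lambda>k\<in>K. x k)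
       = distr (PiM K (\<lambda>_. N)) (PiM K (\<lambda>_. N)) (\<lambda>x. x)"
      by (rule distr_cong) (auto simp: space_PiM PiE_def extensional_restrict intro!: sets_PiM_cong)
    then show ?thesis by simp
  qed
  moreover have "PiM K (\<lambda>k. distr (PiM K (\<lambda>_. N)) borel (\<lambda>y. y k)) = PiM K (\<lambda>_. N)"
    by (rule PiM_cong) (auto simp: d)
  moreover have rv: "(\<lambda>y. y k) \<in> borel_measurable (PiM K (\<lambda>_. N))" for k
  proof (cases "k \<in> K")
    case True then show ?thesis by (simp add: measurable_component_singleton)
  next
    case False
    have "(\<lambda>y. undefined::real) \<in> borel_measurable (PiM K (\<lambda>_. N))" by simp
    then show ?thesis
      by (rule measurable_cong[THEN iffD1, rotated]) (auto simp: space_PiM PiE_def extensional_def False)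
  qed
  ultimately show ?thesis
    by (subst P.indep_vars_iff_distr_eq_PiM[OF assms]) auto
qed

lemma slice_prob:
  fixes a :: "'k \<Rightarrow> real"
  assumes K: "finite K" and s: "(\<Sum>k\<in>K. (a k)\<^sup>2) > 0"
  shows "measure (PiM K (\<lambda>_. N)) {y \<in> space (PiM K (\<lambda>_. N)). 0 \<le> b + (\<Sum>k\<in>K. a k * y k)}
       = cdf N (b / sqrt (\<Sum>k\<in>K. (a k)\<^sup>2))"
proof -
  let ?P = "PiM K (\<lambda>_. N)"
  interpret P: prob_space ?P by (rule PiN_prob)
  define J where "J = {k\<in>K. a k \<noteq> 0}"
  have J: "finite J" "J \<subseteq> K" using K by (auto simp: J_def)
  have sJ: "(\<Sum>k\<in>K. (a k)\<^sup>2) = (\<Sum>k\<in>J. (a k)\<^sup>2)"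
    unfolding J_def by (rule sum.mono_neutral_right[OF K]) auto
  have tJ: "(\<Sum>k\<in>K. a k * y k) = (\<Sum>k\<in>J. a k * y k)" for y
    unfolding J_def by (rule sum.mono_neutral_right[OF K]) auto
  have Jne: "J \<noteq> {}" using s sJ by auto
  define \<sigma> where "\<sigma> = sqrt (\<Sum>k\<in>K. (a k)\<^sup>2)"
  have \<sigma>: "\<sigma> > 0" using s by (simp add: \<sigma>_def)
  have ind0: "P.indep_vars (\<lambda>_. borel) (\<lambda>k y. y k) K"
    by (rule coord_indep) (use Jne J in auto)
  have ind: "P.indep_vars (\<lambda>_. borel) (\<lambda>k y. a k * y k) J"
    using P.indep_vars_compose2[OF P.indep_vars_subset[OF ind0 J(2)], of "\<lambda>k z. a k * z" "\<lambda>_. borel"]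
    by auto
  have dk: "distributed ?P lborel (\<lambda>y. a k * y k) (normal_density 0 \<bar>a k\<bar>)" if "k \<in> J" for k
    using P.normal_density_affine[OF coord_distributed[of k K], of "a k" 0] that J
    by (auto simp: J_def)
  have T: "distributed ?P lborel (\<lambda>y. \<Sum>k\<in>J. a k * y k) (normal_density 0 \<sigma>)"
    using P.sum_indep_normal[OF J(1) Jne ind, of "\<lambda>k. \<bar>a k\<bar>" "\<lambda>_. 0"] dk
    by (auto simp: J_def \<sigma>_def sJ)
  have Z: "distributed ?P lborel (\<lambda>y. 0 + (- 1/\<sigma>) * (\<Sum>k\<in>J. a k * y k)) (normal_density (0 + (- 1/\<sigma>) * 0) (\<bar>- 1/\<sigma>\<bar> * \<sigma>))"
    by (rule P.normal_density_affine[OF T \<sigma>]) (use \<sigma> in auto)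
  define Zf where "Zf = (\<lambda>y. (- 1/\<sigma>) * (\<Sum>k\<in>J. a k * y k))"
  have Z': "distributed ?P lborel Zf std_normal_density"
    using Z \<sigma> by (simp add: Zf_def)
  have ev: "{y \<in> space ?P. 0 \<le> b + (\<Sum>k\<in>K. a k * y k)} = Zf -` {..b/\<sigma>} \<inter> space ?P"
    unfolding Zf_def tJ using \<sigma> by (auto simp: field_simps)
  have "measure ?P (Zf -` {..b/\<sigma>} \<inter> space ?P) = measure (distr ?P lborel Zf) {..b/\<sigma>}"
    using Z' by (subst measure_distr) (auto simp: distributed_def)
  also have "distr ?P lborel Zf = N"
    using Z' by (simp add: distributed_def)
  finally show ?thesis using ev by (simp add: cdf_def \<sigma>_def)
qed

lemma N_mom2: "integral\<^sup>L N (\<lambda>z. z^2) = 1" "integrable N (\<lambda>z. z^2)"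
  using std_normal_distribution_even_moments[of 1] by auto

lemma N_mom4: "integral\<^sup>L N (\<lambda>z. z^4) = 3" "integrable N (\<lambda>z. z^4)"
  using std_normal_distribution_even_moments[of 2] by (auto simp: fact_numeral)

lemma N_u: "integral\<^sup>L N (\<lambda>z. z^2 - 1) = 0" "integrable N (\<lambda>z. z^2 - 1)"
proof -
  interpret prob_space N by (rule N_prob)
  show "integrable N (\<lambda>z. z^2 - 1)" using N_mom2 by auto
  show "integral\<^sup>L N (\<lambda>z. z^2 - 1) = 0" using N_mom2 using prob_space by simp
qed

lemma N_u2: "integral\<^sup>L N (\<lambda>z. (z^2 - 1)^2) = 2" "integrable N (\<lambda>z. (z^2 - 1)^2)"
proof -
  interpret prob_space N by (rule N_prob)
  have e: "(\<lambda>z::real. (z^2 - 1)^2) = (\<lambda>z. z^4 - 2 * z^2 + 1)"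
    by (auto simp: power2_eq_square power4_eq_xxxx algebra_simps)
  show "integrable N (\<lambda>z. (z^2 - 1)^2)" unfolding e using N_mom2 N_mom4 by auto
  show "integral\<^sup>L N (\<lambda>z. (z^2 - 1)^2) = 2" unfolding e using N_mom2 N_mom4 using prob_space by simp
qed

lemma N_sf: "product_sigma_finite (\<lambda>_::'k. N)"
proof -
  interpret prob_space N by (rule N_prob)
  show ?thesis by unfold_locales
qed

lemma int_single:
  fixes g :: "real \<Rightarrow> real"
  assumes "k \<in> K" "g \<in> borel_measurable borel"
  shows "(\<integral>y. g (y k) \<partial>PiM K (\<lambda>_. N)) = integral\<^sup>L N g"
    and "integrable N g \<Longrightarrow> integrable (PiM K (\<lambda>_. N)) (\<lambda>y. g (y k))"
proof -
  have d: "distr (PiM K (\<lambda>_. N)) N (\<lambda>y. y k) = N"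
    by (rule distr_PiM_component[OF N_prob assms(1)])
  have m: "(\<lambda>y. y k) \<in> measurable (PiM K (\<lambda>_. N)) N"
    using assms(1) by (simp add: measurable_component_singleton)
  show "(\<integral>y. g (y k) \<partial>PiM K (\<lambda>_. N)) = integral\<^sup>L N g"
    using integral_distr[OF m, of g] assms d by simp
  show "integrable N g \<Longrightarrow> integrable (PiM K (\<lambda>_. N)) (\<lambda>y. g (y k))"
    using integrable_distr[OF m, of g] d by simp
qed

lemma int_pair:
  fixes g h :: "real \<Rightarrow> real"
  assumes K: "finite K" and kl: "k \<in> K" "l \<in> K" "k \<noteq> l"
    and g: "integrable N g" and h: "integrable N h"
  shows "(\<integral>y. g (y k) * h (y l) \<partial>PiM K (\<lambda>_. N)) = integral\<^sup>L N g * integral\<^sup>L N h"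
    and "integrable (PiM K (\<lambda>_. N)) (\<lambda>y. g (y k) * h (y l))"
proof -
  interpret product_sigma_finite "\<lambda>_. N" by (rule N_sf)
  interpret prob_space N by (rule N_prob)
  define f where "f = (\<lambda>p. if p = k then g else if p = l then h else (\<lambda>_. 1::real))"
  have fi: "integrable N (f p)" for p using g h by (auto simp: f_def)
  have pe: "(\<Prod>p\<in>K. f p (y p)) = g (y k) * h (y l)" for y
  proof -
    have "(\<Prod>p\<in>K. f p (y p)) = (\<Prod>p\<in>{k,l}. f p (y p))"
      by (rule prod.mono_neutral_right[OF K]) (use kl in \<open>auto simp: f_def\<close>)
    also have "\<dots> = g (y k) * h (y l)" using kl by (simp add: f_def)
    finally show ?thesis .
  qed
  have pi: "(\<Prod>p\<in>K. integral\<^sup>L N (f p)) = integral\<^sup>L N g * integral\<^sup>L N h"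
  proof -
    have "(\<Prod>p\<in>K. integral\<^sup>L N (f p)) = (\<Prod>p\<in>{k,l}. integral\<^sup>L N (f p))"
      by (rule prod.mono_neutral_right[OF K]) (use kl in \<open>auto simp: f_def prob_space[simplified]\<close>)
    also have "\<dots> = integral\<^sup>L N g * integral\<^sup>L N h" using kl by (simp add: f_def)
    finally show ?thesis .
  qed
  show "(\<integral>y. g (y k) * h (y l) \<partial>PiM K (\<lambda>_. N)) = integral\<^sup>L N g * integral\<^sup>L N h"
    using product_integral_prod[OF K fi, of "\<lambda>p. p"] pe pi by simp
  show "integrable (PiM K (\<lambda>_. N)) (\<lambda>y. g (y k) * h (y l))"
    using product_integrable_prod[OF K fi, of "\<lambda>p. p"] pe by simp
qed

lemma conc:
  assumes K: "finite K" and d: "\<delta> > 0"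
  shows "measure (PiM K (\<lambda>_. N)) {y\<in>space (PiM K (\<lambda>_. N)). \<delta> \<le> \<bar>(\<Sum>k\<in>K. (y k)\<^sup>2) - real (card K)\<bar>}
    \<le> 2 * real (card K) / \<delta>\<^sup>2"
proof -
  let ?P = "PiM K (\<lambda>_. N)"
  interpret P: prob_space ?P by (rule PiN_prob)
  define u where "u = (\<lambda>z::real. z^2 - 1)"
  define f where "f = (\<lambda>y. \<Sum>k\<in>K. u (y k))"
  have fe: "f y = (\<Sum>k\<in>K. (y k)\<^sup>2) - real (card K)" for y
    by (simp add: f_def u_def sum_subtractf)
  have um: "u \<in> borel_measurable borel" by (simp add: u_def)
  have u2m: "(\<lambda>z. (u z)^2) \<in> borel_measurable borel" by (simp add: u_def)
  have ui: "integrable (PiM K (\<lambda>_. N)) (\<lambda>y. u (y k))" if "k \<in> K" for k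
    using int_single(2)[OF that um] N_u by (simp add: u_def)
  have Ef: "P.expectation f = 0"
  proof -
    have "P.expectation f = (\<Sum>k\<in>K. (\<integral>y. u (y k) \<partial>?P))"
      unfolding f_def using Bochner_Integration.integral_sum[where I=K and M="?P" and f="\<lambda>k y. u (y k)"] ui by simp
    also have "\<dots> = 0"
      using int_single(1)[OF _ um, of _ K] N_u by (intro sum.neutral) (simp add: u_def)
    finally show ?thesis .
  qed
  have fm: "f \<in> borel_measurable ?P" unfolding f_def u_def by measurable
  have pairi: "integrable ?P (\<lambda>y. u (y k) * u (y l)) \<and> (\<integral>y. u (y k) * u (y l) \<partial>?P) = (if k = l then 2 else 0)"
    if "k \<in> K" "l \<in> K" for k l
  proof (cases "k = l")
    case True
    have "integrable ?P (\<lambda>y. (u (y k))^2)" using int_single(2)[OF that(1) u2m] N_u2 by (simp add: u_def)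
    moreover have "(\<integral>y. (u (y k))^2 \<partial>?P) = 2" using int_single(1)[OF that(1) u2m] N_u2 by (simp add: u_def)
    ultimately show ?thesis using True by (simp add: power2_eq_square)
  next
    case False
    show ?thesis using int_pair[OF K that False, of u u] N_u False by (simp add: u_def)
  qed
  have f2: "(f y)^2 = (\<Sum>k\<in>K. \<Sum>l\<in>K. u (y k) * u (y l))" for y
    by (simp add: f_def power2_eq_square sum_product)
  have f2i: "integrable ?P (\<lambda>y. (f y)^2)"
    unfolding f2 by (intro Bochner_Integration.integrable_sum) (use pairi in auto)
  have Ef2: "P.expectation (\<lambda>y. (f y)^2) = 2 * real (card K)"
  proof -
    have "P.expectation (\<lambda>y. (f y)^2) = (\<Sum>k\<in>K. \<Sum>l\<in>K. (\<integral>y. u (y k) * u (y l) \<partial>?P))"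
    proof -
      have "P.expectation (\<lambda>y. (f y)^2) = (\<Sum>k\<in>K. (\<integral>y. (\<Sum>l\<in>K. u (y k) * u (y l)) \<partial>?P))"
        unfolding f2 using Bochner_Integration.integral_sum[where I=K and M="?P" and f="\<lambda>k y. \<Sum>l\<in>K. u (y k) * u (y l)"] pairi
        by (auto intro!: Bochner_Integration.integrable_sum)
      also have "\<dots> = (\<Sum>k\<in>K. \<Sum>l\<in>K. (\<integral>y. u (y k) * u (y l) \<partial>?P))"
        by (intro sum.cong refl Bochner_Integration.integral_sum) (use pairi in auto)
      finally show ?thesis .
    qed
    also have "\<dots> = (\<Sum>k\<in>K. \<Sum>l\<in>K. (if k = l then 2 else 0))"
      using pairi by (intro sum.cong) auto
    also have "\<dots> = 2 * real (card K)" using K by simp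
    finally show ?thesis .
  qed
  have "P.prob {y\<in>space ?P. \<bar>f y - P.expectation f\<bar> \<ge> \<delta>} \<le> P.variance f / \<delta>\<^sup>2"
    by (rule P.Chebyshev_inequality[OF fm f2i d])
  then show ?thesis using Ef Ef2 by (simp add: fe)
qed

definition I1 :: "nat \<Rightarrow> nat \<Rightarrow> (nat \<times> nat) set" where "I1 n i = {i} \<times> {..<n}"
definition I2 :: "nat \<Rightarrow> nat \<Rightarrow> nat \<Rightarrow> (nat \<times> nat) set" where "I2 m n i = ({..<m} - {i}) \<times> {..<n}"
definition hI :: "nat \<Rightarrow> nat \<Rightarrow> nat \<Rightarrow> (nat \<times> nat \<Rightarrow> real) \<Rightarrow> real" where
  "hI m n i x = (\<integral>y. indicator (event_E m n i) (merge (I1 n i) (I2 m n i) (x, y)) \<partial>PiM (I2 m n i) (\<lambda>_. N))"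

lemma E_sets:
  assumes "i < m"
  shows "event_E m n i \<in> sets (gauss_matrix m n)"
proof -
  have c: "(\<lambda>W. W (k,j)) \<in> borel_measurable (gauss_matrix m n)" if "k < m" "j < n" for k j
    unfolding gauss_matrix_def using that by (simp add: measurable_component_singleton)
  have Fm: "(\<lambda>W. \<Sum>j<n. W (i, j) * (\<Sum>k<m. W (k, j))) \<in> borel_measurable (gauss_matrix m n)"
    using assms by (intro borel_measurable_sum borel_measurable_times c) auto
  have "event_E m n i = (\<lambda>W. \<Sum>j<n. W (i, j) * (\<Sum>k<m. W (k, j))) -` {0..} \<inter> space (gauss_matrix m n)"
    by (auto simp: event_E_def)
  also have "\<dots> \<in> sets (gauss_matrix m n)" by (rule measurable_sets[OF Fm]) auto
  finally show ?thesis .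
qed

lemma split_meas:
  assumes "i < m"
  shows "measure (gauss_matrix m n) (event_E m n i) = (\<integral>x. hI m n i x \<partial>PiM (I1 n i) (\<lambda>_. N))"
    and "integrable (PiM (I1 n i) (\<lambda>_. N)) (hI m n i)"
    and "x \<in> space (PiM (I1 n i) (\<lambda>_. N)) \<Longrightarrow> 0 \<le> hI m n i x \<and> hI m n i x \<le> 1"
proof -
  interpret product_sigma_finite "\<lambda>_::nat\<times>nat. N" by (rule N_sf)
  interpret G: prob_space "gauss_matrix m n" unfolding gauss_matrix_def by (rule PiN_prob)
  interpret P2: prob_space "PiM (I2 m n i) (\<lambda>_. N)" by (rule PiN_prob)
  interpret P1: prob_space "PiM (I1 n i) (\<lambda>_. N)" by (rule PiN_prob)
  have U: "I1 n i \<union> I2 m n i = {..<m} \<times> {..<n}" using assms by (auto simp: I1_def I2_def)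
  have D: "I1 n i \<inter> I2 m n i = {}" by (auto simp: I1_def I2_def)
  have F: "finite (I1 n i)" "finite (I2 m n i)" by (auto simp: I1_def I2_def)
  have G: "gauss_matrix m n = PiM (I1 n i \<union> I2 m n i) (\<lambda>_. N)" unfolding U gauss_matrix_def ..
  have Es: "event_E m n i \<in> sets (PiM (I1 n i \<union> I2 m n i) (\<lambda>_. N))" using E_sets[OF assms, of n] unfolding G .
  have int: "integrable (PiM (I1 n i \<union> I2 m n i) (\<lambda>_. N)) (indicator (event_E m n i) :: _ \<Rightarrow> real)"
  proof -
    interpret GG: prob_space "PiM (I1 n i \<union> I2 m n i) (\<lambda>_. N)" by (rule PiN_prob)
    show ?thesis by (intro integrable_real_indicator) (simp_all add: GG.emeasure_eq_measure Es)
  qed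
  have "measure (gauss_matrix m n) (event_E m n i) = (\<integral>W. indicator (event_E m n i) W \<partial>gauss_matrix m n)"
    using E_sets[OF assms] by simp
  also have "\<dots> = (\<integral>x. hI m n i x \<partial>PiM (I1 n i) (\<lambda>_. N))"
    unfolding G hI_def by (rule product_integral_fold[OF D F int])
  finally show "measure (gauss_matrix m n) (event_E m n i) = (\<integral>x. hI m n i x \<partial>PiM (I1 n i) (\<lambda>_. N))" .
  have mm: "merge (I1 n i) (I2 m n i) \<in> measurable (PiM (I1 n i) (\<lambda>_. N) \<Otimes>\<^sub>M PiM (I2 m n i) (\<lambda>_. N)) (PiM (I1 n i \<union> I2 m n i) (\<lambda>_. N))"
    by (rule measurable_merge)
  have hm0: "(\<lambda>p. indicator (event_E m n i) (merge (I1 n i) (I2 m n i) p) :: real) \<in> borel_measurable (PiM (I1 n i) (\<lambda>_. N) \<Otimes>\<^sub>M PiM (I2 m n i) (\<lambda>_. N))"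
    by (rule measurable_compose[OF mm borel_measurable_indicator[OF Es]])
  have hm: "hI m n i \<in> borel_measurable (PiM (I1 n i) (\<lambda>_. N))"
    unfolding hI_def
    by (rule P2.borel_measurable_lebesgue_integral[where f="\<lambda>x y. indicator (event_E m n i) (merge (I1 n i) (I2 m n i) (x, y))", simplified])
       (use hm0 in \<open>simp add: case_prod_unfold\<close>)
  have hb: "norm (hI m n i x) \<le> 1" if x: "x \<in> space (PiM (I1 n i) (\<lambda>_. N))" for x
  proof -
    have ym: "(\<lambda>y. indicator (event_E m n i) (merge (I1 n i) (I2 m n i) (x, y)) :: real) \<in> borel_measurable (PiM (I2 m n i) (\<lambda>_. N))"
      by (rule measurable_Pair2[OF hm0 x])
    have yi: "integrable (PiM (I2 m n i) (\<lambda>_. N)) (\<lambda>y. indicator (event_E m n i) (merge (I1 n i) (I2 m n i) (x, y)) :: real)"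
      by (rule P2.integrable_const_bound[where B=1]) (use ym in \<open>auto simp: indicator_def\<close>)
    have "norm (hI m n i x) \<le> (\<integral>y. norm (indicator (event_E m n i) (merge (I1 n i) (I2 m n i) (x, y)) :: real) \<partial>PiM (I2 m n i) (\<lambda>_. N))"
      unfolding hI_def by (rule integral_norm_bound)
    also have "\<dots> \<le> (\<integral>y. 1 \<partial>PiM (I2 m n i) (\<lambda>_. N))"
      by (intro integral_mono) (use yi in \<open>auto simp: indicator_def\<close>)
    also have "\<dots> = 1" by (simp add: P2.prob_space)
    finally show ?thesis .
  qed
  show "integrable (PiM (I1 n i) (\<lambda>_. N)) (hI m n i)"
    by (rule P1.integrable_const_bound[where B=1]) (use hb hm in auto)
  assume x: "x \<in> space (PiM (I1 n i) (\<lambda>_. N))"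
  have "0 \<le> hI m n i x" unfolding hI_def by (rule Bochner_Integration.integral_nonneg) auto
  with hb[OF x] show "0 \<le> hI m n i x \<and> hI m n i x \<le> 1" by simp
qed

lemma merge_sum:
  fixes x y :: "nat \<times> nat \<Rightarrow> real"
  assumes "i < m"
  shows "(\<Sum>j<n. merge (I1 n i) (I2 m n i) (x, y) (i, j) * (\<Sum>k<m. merge (I1 n i) (I2 m n i) (x, y) (k, j)))
    = (\<Sum>j<n. (x (i, j))\<^sup>2) + (\<Sum>p\<in>I2 m n i. x (i, snd p) * y p)"
proof -
  define A where "A = {..<m} - {i}"
  have W1: "merge (I1 n i) (I2 m n i) (x, y) (i, j) = x (i, j)" if "j < n" for j
    using that by (simp add: merge_def I1_def)
  have W2: "merge (I1 n i) (I2 m n i) (x, y) (k, j) = y (k, j)" if "j < n" "k \<in> A" for j k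
    using that by (auto simp: merge_def I1_def I2_def A_def)
  have S: "(\<Sum>k<m. merge (I1 n i) (I2 m n i) (x, y) (k, j)) = x (i, j) + (\<Sum>k\<in>A. y (k, j))" if "j < n" for j
  proof -
    have "(\<Sum>k<m. merge (I1 n i) (I2 m n i) (x, y) (k, j)) = merge (I1 n i) (I2 m n i) (x, y) (i, j) + (\<Sum>k\<in>A. merge (I1 n i) (I2 m n i) (x, y) (k, j))"
      unfolding A_def using assms by (subst sum.remove[of _ i]) auto
    also have "\<dots> = x (i, j) + (\<Sum>k\<in>A. y (k, j))"
      using W1[OF that] W2[OF that] by simp
    finally show ?thesis .
  qed
  have "(\<Sum>j<n. merge (I1 n i) (I2 m n i) (x, y) (i, j) * (\<Sum>k<m. merge (I1 n i) (I2 m n i) (x, y) (k, j)))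
      = (\<Sum>j<n. x (i, j) * (x (i, j) + (\<Sum>k\<in>A. y (k, j))))"
    using W1 S by (intro sum.cong) auto
  also have "\<dots> = (\<Sum>j<n. (x (i, j))\<^sup>2) + (\<Sum>j<n. \<Sum>k\<in>A. x (i, j) * y (k, j))"
    by (simp add: algebra_simps power2_eq_square sum.distrib sum_distrib_left)
  also have "(\<Sum>j<n. \<Sum>k\<in>A. x (i, j) * y (k, j)) = (\<Sum>k\<in>A. \<Sum>j<n. x (i, j) * y (k, j))"
    by (rule sum.swap)
  also have "\<dots> = (\<Sum>p\<in>I2 m n i. x (i, snd p) * y p)"
    unfolding I2_def A_def[symmetric] by (subst sum.cartesian_product) (simp add: case_prod_beta)
  finally show ?thesis .
qed

lemma sumsq_I2:
  fixes x :: "nat \<times> nat \<Rightarrow> real"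
  assumes "i < m"
  shows "(\<Sum>p\<in>I2 m n i. (x (i, snd p))\<^sup>2) = real (m - 1) * (\<Sum>j<n. (x (i, j))\<^sup>2)"
proof -
  have "(\<Sum>p\<in>I2 m n i. (x (i, snd p))\<^sup>2) = (\<Sum>k\<in>{..<m} - {i}. \<Sum>j<n. (x (i, j))\<^sup>2)"
    unfolding I2_def by (subst sum.cartesian_product) (simp add: case_prod_beta)
  also have "\<dots> = real (m - 1) * (\<Sum>j<n. (x (i, j))\<^sup>2)"
    using assms by simp
  finally show ?thesis .
qed

lemma U_eq: "i < m \<Longrightarrow> I1 n i \<union> I2 m n i = {..<m} \<times> {..<n}"
  by (auto simp: I1_def I2_def)

lemma hI_formula:
  assumes im: "i < m" and m2: "2 \<le> m" and x: "x \<in> space (PiM (I1 n i) (\<lambda>_. N))"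
    and q: "(\<Sum>j<n. (x (i, j))\<^sup>2) > 0"
  shows "hI m n i x = cdf N (sqrt (\<Sum>j<n. (x (i, j))\<^sup>2) / sqrt (real (m - 1)))"
proof -
  let ?P2 = "PiM (I2 m n i) (\<lambda>_. N)"
  let ?G = "PiM (I1 n i \<union> I2 m n i) (\<lambda>_. N)"
  define q where "q = (\<Sum>j<n. (x (i, j))\<^sup>2)"
  interpret P2: prob_space ?P2 by (rule PiN_prob)
  have mm: "merge (I1 n i) (I2 m n i) \<in> measurable (PiM (I1 n i) (\<lambda>_. N) \<Otimes>\<^sub>M ?P2) ?G"
    by (rule measurable_merge)
  have ym: "(\<lambda>y. merge (I1 n i) (I2 m n i) (x, y)) \<in> measurable ?P2 ?G"
    by (rule measurable_Pair2[OF mm x])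
  have G: "gauss_matrix m n = ?G" unfolding U_eq[OF im] gauss_matrix_def ..
  have Es: "event_E m n i \<in> sets ?G" using E_sets[OF im, of n] unfolding G .
  define S where "S = (\<lambda>y. merge (I1 n i) (I2 m n i) (x, y)) -` event_E m n i \<inter> space ?P2"
  have Ss: "S \<in> sets ?P2" unfolding S_def by (rule measurable_sets[OF ym Es])
  have "hI m n i x = (\<integral>y. indicator S y \<partial>?P2)"
    unfolding hI_def by (rule Bochner_Integration.integral_cong[OF refl]) (auto simp: indicator_def S_def)
  also have "\<dots> = measure ?P2 S"
    using Ss by (simp add: P2.emeasure_eq_measure)
  also have "S = {y \<in> space ?P2. 0 \<le> q + (\<Sum>p\<in>I2 m n i. x (i, snd p) * y p)}"
  proof -
    have "merge (I1 n i) (I2 m n i) (x, y) \<in> space (gauss_matrix m n)" if "y \<in> space ?P2" for y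
      using measurable_space[OF ym that] G by simp
    then show ?thesis
      unfolding S_def event_E_def q_def using merge_sum[OF im, where n=n and x=x] by auto
  qed
  also have "measure ?P2 {y \<in> space ?P2. 0 \<le> q + (\<Sum>p\<in>I2 m n i. x (i, snd p) * y p)}
      = cdf N (q / sqrt (\<Sum>p\<in>I2 m n i. (x (i, snd p))\<^sup>2))"
  proof (rule slice_prob)
    show "finite (I2 m n i)" by (simp add: I2_def)
    show "0 < (\<Sum>p\<in>I2 m n i. (x (i, snd p))\<^sup>2)"
      using sumsq_I2[OF im, where n=n and x=x] q m2 by simp
  qed
  also have "q / sqrt (\<Sum>p\<in>I2 m n i. (x (i, snd p))\<^sup>2) = sqrt q / sqrt (real (m - 1))"
  proof -
    have qq: "q = sqrt q * sqrt q" using q by (simp add: q_def)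
    have "sqrt (\<Sum>p\<in>I2 m n i. (x (i, snd p))\<^sup>2) = sqrt (real (m - 1)) * sqrt q"
      using sumsq_I2[OF im, where n=n and x=x] by (simp add: q_def real_sqrt_mult)
    moreover have "sqrt q > 0" using q by (simp add: q_def)
    moreover have "sqrt (real (m - 1)) > 0" using m2 by simp
    ultimately show ?thesis using qq by (simp add: field_simps)
  qed
  finally show ?thesis unfolding q_def .
qed

definition gI :: "real \<Rightarrow> real" where
  "gI z = (LBINT t=ereal 0..ereal z. exp (- (t^2)))"

lemma gI_deriv: "(gI has_real_derivative exp (- (x^2))) (at x)"
proof -
  define R where "R = \<bar>x\<bar> + 1"
  have c: "continuous_on {-R..R} (\<lambda>t::real. exp (- (t^2)))" by (intro continuous_intros)
  have "((\<lambda>u. LBINT y=ereal 0..ereal u. exp (- (y^2))) has_vector_derivative exp (- (x^2))) (at x within {-R..R})"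
    by (rule interval_integral_FTC2[where c=0, OF _ _ c]) (auto simp: R_def)
  moreover have "at x within {-R..R} = at x" by (rule at_within_Icc_at) (auto simp: R_def)
  ultimately show ?thesis
    unfolding gI_def[abs_def] by (simp add: has_real_derivative_iff_has_vector_derivative)
qed

lemma gI_0: "gI 0 = 0" by (simp add: gI_def)

lemma gI_odd: "gI (- z) = - gI z"
proof -
  define G where "G u = - gI (- u)" for u
  have dG: "(G has_real_derivative exp (- (u^2))) (at u)" for u
  proof -
    have "((\<lambda>u. gI (- u)) has_real_derivative exp (- ((- u)^2)) * (- 1)) (at u)"
      by (rule DERIV_chain2[OF gI_deriv]) (auto intro!: derivative_eq_intros)
    then show ?thesis unfolding G_def[abs_def] using DERIV_minus by fastforce
  qed
  have "(LBINT t=ereal 0..ereal z. exp (- (t^2))) = G z - G 0"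
    by (rule interval_integral_FTC_finite)
       (auto intro!: continuous_intros has_field_derivative_at_within[OF dG]
             simp: has_real_derivative_iff_has_vector_derivative[symmetric])
  then show ?thesis by (simp add: G_def gI_def[symmetric] gI_0)
qed

lemma N_single: "measure N {c} = 0"
proof -
  have "emeasure N {c} = (\<integral>\<^sup>+ x. ennreal (std_normal_density x) * indicator {c} x \<partial>lborel)"
    by (simp add: emeasure_density)
  also have "\<dots> = (\<integral>\<^sup>+ x. ennreal (std_normal_density c) * indicator {c} x \<partial>lborel)"
    by (intro nn_integral_cong) (auto split: split_indicator)
  also have "\<dots> = 0" by simp
  finally show ?thesis by (simp add: measure_def)
qed

lemma N_half: "measure N {..0} = 1/2"
proof -
  interpret real_distribution N by (rule real_dist_normal_dist)
  have d0: "distributed N lborel (\<lambda>x. x) std_normal_density"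
  proof -
    have "distr N lborel (\<lambda>x. x) = distr N N (\<lambda>x. x)" by (rule distr_cong) auto
    then show ?thesis unfolding distributed_def by simp
  qed
  have "distributed N lborel (\<lambda>x. 0 + (-1) * x) (normal_density (0 + (-1) * 0) (\<bar>-1\<bar> * 1))"
    by (rule normal_density_affine[OF d0]) auto
  then have "distr N lborel uminus = N"
    by (simp add: distributed_def)
  then have "measure N {0..} = measure (distr N lborel uminus) {0..}" by simp
  also have "\<dots> = measure N (uminus -` {0..} \<inter> space N)"
    by (rule measure_distr) auto
  also have "uminus -` {0..} \<inter> space N = {..0::real}" by auto
  finally have sym: "measure N {0..} = measure N {..0}" .
  have "measure N {0..} = measure N {0} + measure N {0<..}"
    by (subst finite_measure_Union[symmetric]) (auto intro!: arg_cong[where f="measure N"])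
  moreover have "measure N {..0} + measure N {0<..} = 1"
  proof -
    have "measure N ({..0} \<union> {0<..}) = measure N {..0} + measure N {0<..}"
      by (rule finite_measure_Union) auto
    moreover have "{..0} \<union> {0<..} = (UNIV::real set)" by auto
    ultimately show ?thesis using prob_space by simp
  qed
  ultimately show ?thesis using sym N_single[of 0] by simp
qed

lemma N_Icc: assumes "a \<ge> 0" shows "measure N {0..a} = 1 / sqrt pi * gI (a / sqrt 2)"
proof -
  define F where "F x = 1 / sqrt pi * gI (x / sqrt 2)" for x
  have dF: "DERIV F x :> std_normal_density x" for x
  proof -
    have "((\<lambda>x. gI (x / sqrt 2)) has_real_derivative exp (- ((x / sqrt 2)^2)) * (1 / sqrt 2)) (at x)"
    proof (rule DERIV_chain2[OF gI_deriv])
      show "((\<lambda>x. x / sqrt 2) has_real_derivative 1 / sqrt 2) (at x)"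
        using DERIV_cdivide[OF DERIV_ident, of "sqrt 2" x UNIV] by simp
    qed
    then have "DERIV F x :> 1 / sqrt pi * (exp (- ((x / sqrt 2)^2)) * (1 / sqrt 2))"
      unfolding F_def[abs_def] by (intro DERIV_cmult)
    moreover have "1 / sqrt pi * (exp (- ((x / sqrt 2)^2)) * (1 / sqrt 2)) = std_normal_density x"
    proof -
      have s2: "(2::real) / sqrt 2 = sqrt 2" by (rule real_div_sqrt) simp
      show ?thesis
        by (simp add: std_normal_density_def power_divide real_sqrt_mult)
    qed
    ultimately show ?thesis by simp
  qed
  have "emeasure N {0..a} = (\<integral>\<^sup>+ x. ennreal (std_normal_density x) * indicator {0..a} x \<partial>lborel)"
    by (simp add: emeasure_density)
  also have "\<dots> = F a - F 0"
    by (rule nn_integral_FTC_Icc) (use assms dF in auto)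
  finally have "emeasure N {0..a} = ennreal (F a - F 0)" .
  moreover have "F a - F 0 \<ge> 0"
    using DERIV_nonneg_imp_nondecreasing[of 0 a F] assms dF by fastforce
  ultimately have "measure N {0..a} = F a - F 0" by (simp add: measure_def)
  then show ?thesis by (simp add: F_def gI_0)
qed

lemma cdf_erfc:
  assumes a: "a \<ge> 0"
  shows "cdf N a = 1/2 * erfc (- a / sqrt 2)"
proof -
  interpret real_distribution N by (rule real_dist_normal_dist)
  have "measure N ({..0} \<union> {0<..a}) = measure N {..0} + measure N {0<..a}"
    by (rule finite_measure_Union) auto
  moreover have "{..0} \<union> {0<..a} = {..a}" using a by auto
  moreover have "measure N ({0} \<union> {0<..a}) = measure N {0} + measure N {0<..a}"
    by (rule finite_measure_Union) auto
  moreover have "{0} \<union> {0<..a} = {0..a}" using a by auto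
  ultimately have "cdf N a = 1/2 + measure N {0..a}"
    using N_half N_single[of 0] by (simp add: cdf_def)
  also have "\<dots> = 1/2 + 1 / sqrt pi * gI (a / sqrt 2)" using N_Icc[OF a] by simp
  also have "\<dots> = 1/2 * erfc (- a / sqrt 2)"
    using gI_odd[of "a / sqrt 2"] by (simp add: erfc_def gI_def[symmetric] algebra_simps)
  finally show ?thesis .
qed

lemma target_eq:
  assumes "c > 0"
  shows "1/2 * erfc (- 1 / sqrt (2 * c)) = cdf N (1 / sqrt c)"
proof -
  have "- 1 / sqrt (2 * c) = - (1 / sqrt c) / sqrt 2" by (simp add: real_sqrt_mult)
  then show ?thesis using cdf_erfc[of "1 / sqrt c"] assms by simp
qed


lemma Phi_cont: "isCont (cdf N) x"
proof -
  interpret real_distribution N by (rule real_dist_normal_dist)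
  show ?thesis using isCont_cdf N_single by simp
qed

lemma Phi_le1: "cdf N x \<le> 1"
proof -
  interpret real_distribution N by (rule real_dist_normal_dist)
  show ?thesis by (rule cdf_bounded_prob)
qed

lemma Phi_mono: "x \<le> y \<Longrightarrow> cdf N x \<le> cdf N y"
proof -
  interpret real_distribution N by (rule real_dist_normal_dist)
  show "x \<le> y \<Longrightarrow> cdf N x \<le> cdf N y" by (rule cdf_nondecreasing)
qed


lemma bound_t:
  assumes im: "i < m" and m2: "2 \<le> m" and d: "0 < \<delta>" "\<delta> < 1" and n: "0 < n"
  shows "cdf N (sqrt ((1 - \<delta>) * n / real (m - 1))) - 2 / (\<delta>\<^sup>2 * n) \<le> measure (gauss_matrix m n) (event_E m n i)"
    and "measure (gauss_matrix m n) (event_E m n i) \<le> cdf N (sqrt ((1 + \<delta>) * n / real (m - 1))) + 2 / (\<delta>\<^sup>2 * n)"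
proof -
  let ?P1 = "PiM (I1 n i) (\<lambda>_. N)"
  interpret P1: prob_space ?P1 by (rule PiN_prob)
  define lo where "lo = cdf N (sqrt ((1 - \<delta>) * n / real (m - 1)))"
  define hi where "hi = cdf N (sqrt ((1 + \<delta>) * n / real (m - 1)))"
  define B where "B = {y\<in>space ?P1. \<delta> * n \<le> \<bar>(\<Sum>p\<in>I1 n i. (y p)\<^sup>2) - real (card (I1 n i))\<bar>}"
  have cardI: "card (I1 n i) = n" by (simp add: I1_def card_cartesian_product)
  have sumI: "(\<Sum>p\<in>I1 n i. (y p)\<^sup>2) = (\<Sum>j<n. (y (i, j))\<^sup>2)" for y :: "nat \<times> nat \<Rightarrow> real"
    unfolding I1_def using sum.cartesian_product[where g="\<lambda>k j. (y (k,j))\<^sup>2" and A="{i}" and B="{..<n}"] by (simp add: case_prod_beta)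
  have Bs: "B \<in> sets ?P1" unfolding B_def by measurable
  have PB: "measure ?P1 B \<le> 2 / (\<delta>\<^sup>2 * n)"
  proof -
    have "measure ?P1 B \<le> 2 * real (card (I1 n i)) / (\<delta> * n)\<^sup>2"
      unfolding B_def by (rule conc) (use d n in \<open>auto simp: I1_def\<close>)
    also have "\<dots> = 2 / (\<delta>\<^sup>2 * n)" using n d by (simp add: cardI power2_eq_square field_simps)
    finally show ?thesis .
  qed
  have hIint: "integrable ?P1 (hI m n i)" by (rule split_meas(2)[OF im])
  have hr: "0 \<le> hI m n i x \<and> hI m n i x \<le> 1" if "x \<in> space ?P1" for x
    by (rule split_meas(3)[OF im that])
  have good: "lo \<le> hI m n i x \<and> hI m n i x \<le> hi" if x: "x \<in> space ?P1" "x \<notin> B" for x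
  proof -
    define q where "q = (\<Sum>j<n. (x (i, j))\<^sup>2)"
    have qb: "\<bar>q - n\<bar> < \<delta> * n" using x unfolding B_def q_def by (simp add: sumI cardI)
    have q0: "q > 0" using qb d n
      by (smt (verit, best) mult_less_cancel_right2 of_nat_0_less_iff)
    have hq: "hI m n i x = cdf N (sqrt q / sqrt (real (m - 1)))"
      unfolding q_def by (rule hI_formula[OF im m2 x(1)]) (use q0 in \<open>simp add: q_def\<close>)
    have m1: "real (m - 1) > 0" using m2 by simp
    have e: "sqrt q / sqrt (real (m - 1)) = sqrt (q / real (m - 1))" by (simp add: real_sqrt_divide)
    have "(1 - \<delta>) * n / real (m - 1) \<le> q / real (m - 1)"
      using qb m1 by (intro divide_right_mono) (auto simp: algebra_simps)
    then have l: "lo \<le> hI m n i x" unfolding lo_def hq e by (intro Phi_mono real_sqrt_le_mono)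
    have "q / real (m - 1) \<le> (1 + \<delta>) * n / real (m - 1)"
      using qb m1 by (intro divide_right_mono) (auto simp: algebra_simps)
    then have h: "hI m n i x \<le> hi" unfolding hi_def hq e by (intro Phi_mono real_sqrt_le_mono)
    show ?thesis using l h by simp
  qed
  have Bi: "integrable ?P1 (indicator B :: _ \<Rightarrow> real)"
    using Bs by (simp add: P1.emeasure_eq_measure)
  have intB: "(\<integral>x. indicator B x \<partial>?P1) = measure ?P1 B" using Bs by (simp add: P1.emeasure_eq_measure)
  have "(\<integral>x. lo - indicator B x \<partial>?P1) \<le> (\<integral>x. hI m n i x \<partial>?P1)"
  proof (rule integral_mono)
    show "integrable ?P1 (\<lambda>x. lo - indicator B x)" using Bi by simp
    show "integrable ?P1 (hI m n i)" by (rule hIint)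
    fix x assume x: "x \<in> space ?P1"
    show "lo - indicator B x \<le> hI m n i x"
    proof (cases "x \<in> B")
      case True then show ?thesis using hr[OF x] Phi_le1[of "sqrt ((1 - \<delta>) * n / real (m - 1))"] by (simp add: lo_def)
    next
      case False then show ?thesis using good[OF x] by simp
    qed
  qed
  moreover have "(\<integral>x. lo - indicator B x \<partial>?P1) = lo - measure ?P1 B"
    using Bi intB by (simp add: P1.prob_space)
  ultimately show "lo - 2 / (\<delta>\<^sup>2 * n) \<le> measure (gauss_matrix m n) (event_E m n i)"
    using PB split_meas(1)[OF im] by simp
  have "(\<integral>x. hI m n i x \<partial>?P1) \<le> (\<integral>x. hi + indicator B x \<partial>?P1)"
  proof (rule integral_mono)
    show "integrable ?P1 (\<lambda>x. hi + indicator B x)" using Bi by simp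
    show "integrable ?P1 (hI m n i)" by (rule hIint)
    fix x assume x: "x \<in> space ?P1"
    show "hI m n i x \<le> hi + indicator B x"
    proof (cases "x \<in> B")
      case True
      have "0 \<le> hi" unfolding hi_def cdf_def by simp
      then show ?thesis using hr[OF x] True by simp
    next
      case False then show ?thesis using good[OF x] by simp
    qed
  qed
  moreover have "(\<integral>x. hi + indicator B x \<partial>?P1) = hi + measure ?P1 B"
    using Bi intB by (simp add: P1.prob_space)
  ultimately show "measure (gauss_matrix m n) (event_E m n i) \<le> hi + 2 / (\<delta>\<^sup>2 * n)"
    using PB split_meas(1)[OF im] by simp
qed


theorem lemma3:
  fixes c :: real and m n :: "nat \<Rightarrow> nat" and i :: nat
  assumes "c > 0"
    and "filterlim m at_top sequentially" and "filterlim n at_top sequentially"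
    and "\<And>t. real (m t) = c * real (n t)"
    and "\<And>t. i < m t"
  shows "(\<lambda>t. measure (gauss_matrix (m t) (n t)) (event_E (m t) (n t) i))
           \<longlonglongrightarrow> 1/2 * erfc (- 1 / sqrt (2 * c))"
proof -
  note c = assms(1) and mlim = assms(2) and nlim = assms(3) and mc = assms(4) and im = assms(5)
  define L where "L = cdf N (1 / sqrt c)"
  define g where "g = (\<lambda>d. cdf N (sqrt ((1 + d) / c)))"
  have g0: "g 0 = L" unfolding g_def L_def by (simp add: real_sqrt_divide)
  have gc: "isCont g d" if "d > -1" for d
    unfolding g_def by (rule isCont_o2[OF _ Phi_cont]) (intro continuous_intros, use c in auto)
  have n0: "n t > 0" for t
  proof -
    have "real (m t) > 0" using im[of t] by simp
    then show ?thesis using mc[of t] c by (simp add: zero_less_mult_iff)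
  qed
  have nreal: "filterlim (\<lambda>t. real (n t)) at_top sequentially"
    by (rule filterlim_compose[OF filterlim_real_sequentially nlim])
  have ratio: "(\<lambda>t. real (n t) / real (m t - 1)) \<longlonglongrightarrow> 1 / c"
  proof -
    have e: "real (n t) / real (m t - 1) = 1 / (c - 1 / real (n t))" for t
    proof -
      have "real (m t - 1) = c * real (n t) - 1" using im[of t] mc[of t] by (simp add: of_nat_diff)
      then show ?thesis using n0[of t] by (simp add: field_simps)
    qed
    have "(\<lambda>t. 1 / real (n t)) \<longlonglongrightarrow> 0"
      using tendsto_inverse_0_at_top[OF nreal] by (simp add: inverse_eq_divide)
    then have "(\<lambda>t. 1 / (c - 1 / real (n t))) \<longlonglongrightarrow> 1 / (c - 0)"
      using c by (intro tendsto_intros) auto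
    then show ?thesis unfolding e by simp
  qed
  have lim_at: "(\<lambda>t. cdf N (sqrt ((1 + d) * real (n t) / real (m t - 1)))) \<longlonglongrightarrow> g d" if "d > -1" for d
  proof -
    have A0: "(\<lambda>t. (1 + d) * (real (n t) / real (m t - 1)) * c - 1) \<longlonglongrightarrow> (1 + d) * (1 / c) * c - 1"
      by (rule tendsto_diff[OF tendsto_mult[OF tendsto_mult[OF tendsto_const ratio] tendsto_const] tendsto_const])
    have A: "(\<lambda>t. (1 + d) * (real (n t) / real (m t - 1)) * c - 1) \<longlonglongrightarrow> d"
      using A0 c by simp
    have "(\<lambda>t. g ((1 + d) * (real (n t) / real (m t - 1)) * c - 1)) \<longlonglongrightarrow> g d"
      by (rule isCont_tendsto_compose[OF gc[OF that] A])
    moreover have "g ((1 + d) * (real (n t) / real (m t - 1)) * c - 1) = cdf N (sqrt ((1 + d) * real (n t) / real (m t - 1)))" for t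
      unfolding g_def using c by simp
    ultimately show ?thesis using c by simp
  qed
  have main: "(\<lambda>t. measure (gauss_matrix (m t) (n t)) (event_E (m t) (n t) i)) \<longlonglongrightarrow> L"
  proof (rule tendstoI)
    fix e :: real assume e: "e > 0"
    obtain s where s: "s > 0" "\<And>d. d \<noteq> 0 \<Longrightarrow> norm (d - 0) < s \<Longrightarrow> norm (g d - g 0) < e / 3"
      using LIM_D[OF gc[of 0, unfolded isCont_def], of "e / 3"] e by auto
    define \<delta> where "\<delta> = min s (1/2) / 2"
    have d: "0 < \<delta>" "\<delta> < 1" "\<delta> < s" using s by (auto simp: \<delta>_def)
    have gp: "\<bar>g \<delta> - L\<bar> < e / 3" using s(2)[of \<delta>] d g0 by simp
    have gm: "\<bar>g (- \<delta>) - L\<bar> < e / 3" using s(2)[of "- \<delta>"] d g0 by simp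
    have ev1: "eventually (\<lambda>t. 2 \<le> m t) sequentially"
      using mlim by (simp add: filterlim_at_top)
    have ev2: "eventually (\<lambda>t. \<bar>cdf N (sqrt ((1 + \<delta>) * real (n t) / real (m t - 1))) - g \<delta>\<bar> < e / 3) sequentially"
      using tendstoD[OF lim_at[of \<delta>], of "e / 3"] d e by (simp add: dist_real_def)
    have ev3: "eventually (\<lambda>t. \<bar>cdf N (sqrt ((1 - \<delta>) * real (n t) / real (m t - 1))) - g (- \<delta>)\<bar> < e / 3) sequentially"
      using tendstoD[OF lim_at[of "- \<delta>"], of "e / 3"] d e by (simp add: dist_real_def)
    have ev4: "eventually (\<lambda>t. 2 / (\<delta>\<^sup>2 * real (n t)) < e / 3) sequentially"
    proof -
      have T: "(\<lambda>t. (2 / \<delta>\<^sup>2) * inverse (real (n t))) \<longlonglongrightarrow> (2 / \<delta>\<^sup>2) * 0"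
        by (intro tendsto_intros tendsto_inverse_0_at_top nreal)
      have "eventually (\<lambda>t. dist ((2 / \<delta>\<^sup>2) * inverse (real (n t))) ((2 / \<delta>\<^sup>2) * 0) < e / 3) sequentially"
        by (rule tendstoD[OF T]) (use e in simp)
      then show ?thesis
        by eventually_elim (auto simp: dist_real_def field_simps)
    qed
    show "eventually (\<lambda>t. dist (measure (gauss_matrix (m t) (n t)) (event_E (m t) (n t) i)) L < e) sequentially"
      using ev1 ev2 ev3 ev4
    proof eventually_elim
      case (elim t)
      note b = bound_t[OF im[of t] elim(1) d(1) d(2) n0[of t]]
      show ?case using b elim(2,3,4) gp gm unfolding dist_real_def abs_less_iff by linarith
    qed
  qed
  show ?thesis using main target_eq[OF c] L_def by simp
qed

end
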